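(* Suppose the nilpotent subalgebra $N=\mathrm{span}_{\mathbb{C}}\{I_{m+1},\dots,I_n\}$ of $\mathbb{A}_n^m$ is a zero algebra, i.e. $I_rI_s=0$ for all $r,s\in\{m+1,\dots,n\}$. Then for every circle $C$ as described in the context, $\lambda:=\int_C\zeta^{-1}\,d\zeta=2\pi i$ (that is, $2\pi i$ times the unit $1$ of $\mathbb{A}_n^m$).
   Context: Fix natural numbers $m\le n$. $\mathbb{A}_n^m$ is a commutative associative algebra with unit over $\mathbb{C}$ with a basis $\{I_k\}_{k=1}^n$ satisfying: (1) for $r,s\in\{1,\dots,m\}$, $I_rI_s=0$ if $r\ne s$ and $I_rI_r=I_r$; (2) for $r,s\in\{m+1,\dots,n\}$, $I_rI_s=\sum_{k=\max\{r,s\}+1}^{n}\Upsilon^{s}_{r,k}I_k$ with constants $\Upsilon^s_{r,k}\in\mathbb{C}$; (3) for each $s\in\{m+1,\dots,n\}$ there is a unique $u_s\in\{1,\dots,m\}$ such that for $r\in\{1,\dots,m\}$, $I_rI_s=I_s$ if $r=u_s$ and $0$ otherwise. Unit $1=\sum_{u=1}^mI_u$; $\mathbb{A}_n^m=S\oplus_sN$ with $S=\mathrm{span}\{I_1,\dots,I_m\}$ semisimple and $N=\mathrm{span}\{I_{m+1},\dots,I_n\}$ nilpotent. $f_u(\sum_k\lambda_kI_k)=\lambda_u$. Let $e_1=1$, $e_2=\sum_ka_kI_k$, $e_3=\sum_kb_kI_k$ ($a_k,b_k\in\mathbb{C}$) be linearly independent over $\mathbb{R}$; $\zeta=xe_1+ye_2+ze_3$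 ($x,y,z\in\mathbb{R}$), $E_3$ their real span. Standing assumption: $f_u(E_3)=\mathbb{C}$ for all $u=1,\dots,m$. $\zeta$ is non-invertible exactly when $(x,y,z)$ lies on one of the lines $L_u=\{x+y\,\mathrm{Re}\,a_u+z\,\mathrm{Re}\,b_u=0,\ y\,\mathrm{Im}\,a_u+z\,\mathrm{Im}\,b_u=0\}$. The circle: $C\subset E_3$ is $C=\{xe_1+ye_2+ze_3:(x,y,z)\in C'\}$ for a Euclidean circle $C'\subset\mathbb{R}^3$ of radius $R>0$ centered at the origin, such that for every $u=1,\dots,m$ the image $f_u(C)$ is a positively oriented closed Jordan curve in $\mathbb{C}$ bounding a domain containing $0$ (so $C$ avoids $\bigcup_uL_u$). Integral: for a Jordan rectifiable curve $\gamma$ and continuous $\Psi=\sum_k(U_k+iV_k)I_k$ on $\gamma_\zeta$, $\int_{\gamma_\zeta}\Psi d\zeta:=\sum_kI_k\int_\gamma(U_k+iV_k)dx+\sum_ke_2I_k\int_\gamma(U_k+iV_k)dy+\sum_ke_3I_k\int_\gamma(U_k+iV_k)dz$. *)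

theory Defs
  imports "HOL-Complex_Analysis.Complex_Analysis"
begin

text \<open>Elements of the algebra A_n^m are represented by their coordinate functions
  nat \<Rightarrow> complex with respect to the basis I_1, ..., I_n (only coordinates 1..n matter).
  Parameters: m n; structure constants Ups with Ups s r k = Upsilon^s_{r,k}; the map u (u s = u_s).\<close>

definition strc :: "nat \<Rightarrow> nat \<Rightarrow> (nat \<Rightarrow> nat \<Rightarrow> nat \<Rightarrow> complex) \<Rightarrow> (nat \<Rightarrow> nat)
    \<Rightarrow> nat \<Rightarrow> nat \<Rightarrow> nat \<Rightarrow> complex" where
  "strc m n Ups u r s k =
     (if r \<le> m \<and> s \<le> m then (if r = s \<and> k = r then 1 else 0)
      else if r \<le> m \<and> m < s then (if r = u s \<and> k = s then 1 else 0)
      else if m < r \<and> s \<le> m then (if s = u r \<and> k = r then 1 else 0)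
      else (if max r s < k \<and> k \<le> n then Ups s r k else 0))"

definition amul :: "nat \<Rightarrow> nat \<Rightarrow> (nat \<Rightarrow> nat \<Rightarrow> nat \<Rightarrow> complex) \<Rightarrow> (nat \<Rightarrow> nat)
    \<Rightarrow> (nat \<Rightarrow> complex) \<Rightarrow> (nat \<Rightarrow> complex) \<Rightarrow> (nat \<Rightarrow> complex)" where
  "amul m n Ups u x y = (\<lambda>k. if k \<in> {1..n}
      then (\<Sum>r=1..n. \<Sum>s=1..n. x r * y s * strc m n Ups u r s k) else 0)"

definition basisI :: "nat \<Rightarrow> nat \<Rightarrow> complex" where
  "basisI r = (\<lambda>k. if k = r then 1 else 0)"

definition aone :: "nat \<Rightarrow> nat \<Rightarrow> complex" where
  "aone m = (\<lambda>k. if 1 \<le> k \<and> k \<le> m then 1 else 0)"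

definition ainv :: "nat \<Rightarrow> nat \<Rightarrow> (nat \<Rightarrow> nat \<Rightarrow> nat \<Rightarrow> complex) \<Rightarrow> (nat \<Rightarrow> nat)
    \<Rightarrow> (nat \<Rightarrow> complex) \<Rightarrow> (nat \<Rightarrow> complex)" where
  "ainv m n Ups u z = (THE w. (\<forall>k. k \<notin> {1..n} \<longrightarrow> w k = 0) \<and> amul m n Ups u z w = aone m)"

definition zeta :: "nat \<Rightarrow> (nat \<Rightarrow> complex) \<Rightarrow> (nat \<Rightarrow> complex) \<Rightarrow> real^3 \<Rightarrow> (nat \<Rightarrow> complex)" where
  "zeta m e2 e3 v = (\<lambda>k. of_real (v$1) * aone m k + of_real (v$2) * e2 k + of_real (v$3) * e3 k)"

definition circ :: "real \<Rightarrow> real^3 \<Rightarrow> real^3 \<Rightarrow> real \<Rightarrow> real^3" where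
  "circ R p q t = R *\<^sub>R (cos (2*pi*t) *\<^sub>R p + sin (2*pi*t) *\<^sub>R q)"

definition circ' :: "real \<Rightarrow> real^3 \<Rightarrow> real^3 \<Rightarrow> real \<Rightarrow> real^3" where
  "circ' R p q t = (2*pi*R) *\<^sub>R (- sin (2*pi*t) *\<^sub>R p + cos (2*pi*t) *\<^sub>R q)"

definition fpath :: "(nat \<Rightarrow> complex) \<Rightarrow> (nat \<Rightarrow> complex) \<Rightarrow> nat \<Rightarrow> (real \<Rightarrow> real^3) \<Rightarrow> real \<Rightarrow> complex" where
  "fpath a b v g = (\<lambda>t. of_real (g t $ 1) + of_real (g t $ 2) * a v + of_real (g t $ 3) * b v)"

text \<open>The integral over gamma_zeta of Psi d zeta, with gamma parametrised by g on [0,1]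
  with derivative g':  sum_k I_k int Psi_k dx + e2 sum_k I_k int Psi_k dy + e3 sum_k I_k int Psi_k dz.\<close>
definition alg_integral :: "nat \<Rightarrow> nat \<Rightarrow> (nat \<Rightarrow> nat \<Rightarrow> nat \<Rightarrow> complex) \<Rightarrow> (nat \<Rightarrow> nat)
    \<Rightarrow> (nat \<Rightarrow> complex) \<Rightarrow> (nat \<Rightarrow> complex) \<Rightarrow> (real^3 \<Rightarrow> (nat \<Rightarrow> complex))
    \<Rightarrow> (real \<Rightarrow> real^3) \<Rightarrow> (real \<Rightarrow> real^3) \<Rightarrow> (nat \<Rightarrow> complex)" where
  "alg_integral m n Ups u e2 e3 Psi g g' =
    (let X = (\<lambda>k. integral {0..1} (\<lambda>t. Psi (g t) k * of_real (g' t $ 1)));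
         Y = (\<lambda>k. integral {0..1} (\<lambda>t. Psi (g t) k * of_real (g' t $ 2)));
         Z = (\<lambda>k. integral {0..1} (\<lambda>t. Psi (g t) k * of_real (g' t $ 3)))
     in (\<lambda>k. X k + amul m n Ups u e2 Y k + amul m n Ups u e3 Z k))"

end

theory Submission
  imports Defs
begin

lemma strc_zero:
  assumes zero_alg: "\<forall>r\<in>{m+1..n}. \<forall>s\<in>{m+1..n}. amul m n Ups u (basisI r) (basisI s) = (\<lambda>_. 0)"
    and "r \<in> {m+1..n}" "s \<in> {m+1..n}" "k \<in> {1..n}"
  shows "strc m n Ups u r s k = 0"
proof -
  have "amul m n Ups u (basisI r) (basisI s) k = 0" using zero_alg assms(2,3) by auto
  moreover have "amul m n Ups u (basisI r) (basisI s) k = strc m n Ups u r s k"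
  proof -
    have "amul m n Ups u (basisI r) (basisI s) k = (\<Sum>r'=1..n. \<Sum>s'=1..n. basisI r r' * basisI s s' * strc m n Ups u r' s' k)"
      using assms(4) by (simp add: amul_def)
    also have "\<dots> = (\<Sum>r'=1..n. if r' = r then strc m n Ups u r s k else 0)"
    proof (intro sum.cong refl)
      fix r' assume "r' \<in> {1..n}"
      have "(\<Sum>s'=1..n. basisI r r' * basisI s s' * strc m n Ups u r' s' k) = (\<Sum>s'=1..n. if s' = s then basisI r r' * strc m n Ups u r' s' k else 0)"
        by (intro sum.cong refl) (auto simp: basisI_def)
      also have "\<dots> = basisI r r' * strc m n Ups u r' s k" using assms(3) by (simp add: sum.delta)
      finally show "(\<Sum>s'=1..n. basisI r r' * basisI s s' * strc m n Ups u r' s' k) = (if r' = r then strc m n Ups u r s k else 0)"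
        by (simp add: basisI_def)
    qed
    also have "\<dots> = strc m n Ups u r s k" using assms(2) by (simp add: sum.delta)
    finally show ?thesis .
  qed
  ultimately show ?thesis by simp
qed

lemma amul_low:
  assumes HZ: "\<forall>r\<in>{m+1..n}. \<forall>s\<in>{m+1..n}. \<forall>k\<in>{1..n}. strc m n Ups u r s k = 0"
    and "m \<le> n" and k: "k \<in> {1..m}"
  shows "amul m n Ups u x y k = x k * y k"
proof -
  have "\<And>r s. r \<in> {1..n} \<Longrightarrow> s \<in> {1..n} \<Longrightarrow> strc m n Ups u r s k = (if r = k then 1 else 0) * (if s = k then 1 else 0)"
  proof -
    fix r s assume r: "r \<in> {1..n}" and s: "s \<in> {1..n}"
    show "strc m n Ups u r s k = (if r = k then 1 else 0) * (if s = k then 1 else 0)"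
    proof (cases "r \<le> m \<and> s \<le> m")
      case True then show ?thesis by (auto simp: strc_def)
    next
      case False
      show ?thesis
      proof (cases "m < r \<and> m < s")
        case True then show ?thesis using HZ r s k \<open>m \<le> n\<close> by auto
      next
        case False2: False
        then show ?thesis using False k by (auto simp: strc_def)
      qed
    qed
  qed
  then have "amul m n Ups u x y k = (\<Sum>r=1..n. \<Sum>s=1..n. (if r = k then x r else 0) * (if s = k then y s else 0))"
    using k assms(2) unfolding amul_def by (auto intro!: sum.cong)
  also have "\<dots> = x k * y k" using k assms(2)
    by (simp add: sum_distrib_left[symmetric] sum_distrib_right[symmetric] sum.delta)
  finally show ?thesis .
qed

lemma amul_high:
  assumes HZ: "\<forall>r\<in>{m+1..n}. \<forall>s\<in>{m+1..n}. \<forall>k\<in>{1..n}. strc m n Ups u r s k = 0"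
    and "m \<le> n" and k: "k \<in> {m+1..n}" and uk: "u k \<in> {1..m}"
  shows "amul m n Ups u x y k = x (u k) * y k + x k * y (u k)"
proof -
  have "\<And>r s. r \<in> {1..n} \<Longrightarrow> s \<in> {1..n} \<Longrightarrow> strc m n Ups u r s k =
      (if r = u k then 1 else 0) * (if s = k then 1 else 0) + (if r = k then 1 else 0) * (if s = u k then 1 else 0)"
  proof -
    fix r s assume r: "r \<in> {1..n}" and s: "s \<in> {1..n}"
    show "strc m n Ups u r s k = (if r = u k then 1 else 0) * (if s = k then 1 else 0) + (if r = k then 1 else 0) * (if s = u k then 1 else 0)"
    proof (cases "m < r \<and> m < s")
      case True then show ?thesis using HZ r s k uk by auto
    next
      case False
      then show ?thesis using k uk by (auto simp: strc_def)
    qed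
  qed
  then have "amul m n Ups u x y k = (\<Sum>r=1..n. \<Sum>s=1..n. (if r = u k then x r else 0) * (if s = k then y s else 0)
        + (if r = k then x r else 0) * (if s = u k then y s else 0))"
    using k assms(2) unfolding amul_def by (auto intro!: sum.cong simp: algebra_simps)
  also have "\<dots> = x (u k) * y k + x k * y (u k)" using k uk assms(2)
    by (simp add: sum.distrib sum_distrib_left[symmetric] sum_distrib_right[symmetric] sum.delta)
  finally show ?thesis .
qed

lemma circ_comp: "circ R p q t $ j = R * (cos (2*pi*t) * p$j + sin (2*pi*t) * q$j)"
  by (simp add: circ_def algebra_simps)

lemma circ'_comp: "circ' R p q t $ j = 2*pi*R * (- sin (2*pi*t) * p$j + cos (2*pi*t) * q$j)"
  by (simp add: circ'_def algebra_simps)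

lemma circ_deriv: "((\<lambda>t. circ R p q t $ j) has_real_derivative circ' R p q t $ j) (at t)"
  unfolding circ_comp circ'_comp
  by (auto intro!: derivative_eq_intros simp: algebra_simps)

lemma circ_cont: "continuous_on S (\<lambda>t. circ R p q t $ j)"
  unfolding circ_comp by (intro continuous_intros)

lemma circ'_cont: "continuous_on S (\<lambda>t. circ' R p q t $ j)"
  unfolding circ'_comp by (intro continuous_intros)

lemma lin_deriv:
  "((\<lambda>t. of_real (circ R p q t $ 1) * \<alpha> + of_real (circ R p q t $ 2) * \<beta> + of_real (circ R p q t $ 3) * (\<gamma>::complex))
     has_vector_derivative (of_real (circ' R p q t $ 1) * \<alpha> + of_real (circ' R p q t $ 2) * \<beta> + of_real (circ' R p q t $ 3) * \<gamma>)) (at t)"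
  by (intro has_vector_derivative_add has_vector_derivative_mult_left has_vector_derivative_of_real circ_deriv)

lemma circ_period: "circ R p q 1 = circ R p q 0"
  by (simp add: circ_def)

theorem theorem6:
  fixes m n :: nat and Ups :: "nat \<Rightarrow> nat \<Rightarrow> nat \<Rightarrow> complex" and u :: "nat \<Rightarrow> nat"
    and a b :: "nat \<Rightarrow> complex" and R :: real and p q :: "real^3"
  assumes "1 \<le> m" and "m \<le> n"
    and "\<forall>s\<in>{m+1..n}. u s \<in> {1..m}"
    and "\<forall>x y. amul m n Ups u x y = amul m n Ups u y x"
    and "\<forall>x y z. amul m n Ups u (amul m n Ups u x y) z = amul m n Ups u x (amul m n Ups u y z)"
    and zero_alg: "\<forall>r\<in>{m+1..n}. \<forall>s\<in>{m+1..n}. amul m n Ups u (basisI r) (basisI s) = (\<lambda>_. 0)"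
    and indep: "\<forall>x y z :: real. (\<forall>k\<in>{1..n}. of_real x * aone m k + of_real y * a k + of_real z * b k = 0)
                  \<longrightarrow> x = 0 \<and> y = 0 \<and> z = 0"
    and onto: "\<forall>v\<in>{1..m}. range (\<lambda>(x::real, y::real, z::real). of_real x + of_real y * a v + of_real z * b v) = UNIV"
    and "R > 0" and "p \<bullet> p = 1" and "q \<bullet> q = 1" and "p \<bullet> q = 0"
    and jordan: "\<forall>v\<in>{1..m}. simple_path (fpath a b v (circ R p q))
                   \<and> pathfinish (fpath a b v (circ R p q)) = pathstart (fpath a b v (circ R p q))
                   \<and> 0 \<in> inside (path_image (fpath a b v (circ R p q)))
                   \<and> winding_number (fpath a b v (circ R p q)) 0 = 1"
  shows "\<forall>k\<in>{1..n}. alg_integral m n Ups u a b (\<lambda>w. ainv m n Ups u (zeta m a b w)) (circ R p q) (circ' R p q) k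
           = 2 * of_real pi * \<i> * aone m k"
proof -
  note assms(1,2,3) 
  have HZ: "\<forall>r\<in>{m+1..n}. \<forall>s\<in>{m+1..n}. \<forall>k\<in>{1..n}. strc m n Ups u r s k = 0"
    using strc_zero[OF zero_alg] by blast
  define L where "L k t = of_real (circ R p q t $ 1) * aone m k + of_real (circ R p q t $ 2) * a k + of_real (circ R p q t $ 3) * b k" for k t
  define L' where "L' k t = of_real (circ' R p q t $ 1) * aone m k + of_real (circ' R p q t $ 2) * a k + of_real (circ' R p q t $ 3) * b k" for k t
  have zL: "zeta m a b (circ R p q t) = (\<lambda>k. L k t)" for t by (simp add: zeta_def L_def fun_eq_iff)
  have D: "(L k has_vector_derivative L' k t) (at t)" for k t
    unfolding L_def L'_def by (rule lin_deriv)
  have contL: "continuous_on S (L k)" for k S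
    unfolding L_def by (intro continuous_intros circ_cont)
  have contL': "continuous_on S (L' k)" for k S
    unfolding L'_def by (intro continuous_intros circ'_cont)
  have fp: "fpath a b v (circ R p q) = L v" if "v \<in> {1..m}" for v
    using that by (auto simp: fpath_def L_def aone_def fun_eq_iff)
  have NZ: "L v t \<noteq> 0" if v: "v \<in> {1..m}" and t: "t \<in> {0..1}" for v t
  proof
    assume "L v t = 0"
    then have "0 \<in> path_image (fpath a b v (circ R p q))"
      using t fp[OF v] by (auto simp: path_image_def image_iff intro!: bexI[of _ t])
    moreover have "0 \<in> inside (path_image (fpath a b v (circ R p q)))" using jordan v by blast
    ultimately show False using inside_no_overlap by blast
  qed
  define W where "W t k = (if k \<in> {1..m} then 1 / L k t else if k \<in> {m+1..n} then - L k t / (L (u k) t)^2 else 0)" for t k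
  have INV: "ainv m n Ups u (zeta m a b (circ R p q t)) = W t" if t: "t \<in> {0..1}" for t
    unfolding ainv_def zL
  proof (rule the_equality)
    show "(\<forall>k. k \<notin> {1..n} \<longrightarrow> W t k = 0) \<and> amul m n Ups u (\<lambda>k. L k t) (W t) = aone m"
    proof (intro conjI allI impI ext)
      fix k assume "k \<notin> {1..n}" then show "W t k = 0" using assms(2) by (auto simp: W_def)
    next
      fix k
      show "amul m n Ups u (\<lambda>k. L k t) (W t) k = aone m k"
      proof (cases "k \<in> {1..m}")
        case True
        then show ?thesis using amul_low[OF HZ assms(2) True] NZ[OF True t] by (simp add: W_def aone_def)
      next
        case False
        show ?thesis
        proof (cases "k \<in> {m+1..n}")
          case True
          then have uk: "u k \<in> {1..m}" using assms(3) by blast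
          have "u k \<notin> {m+1..n}" using uk by auto
          then show ?thesis using amul_high[OF HZ assms(2) True uk] NZ[OF uk t] True False uk
            by (simp add: W_def aone_def field_simps power2_eq_square)
        next
          case False2: False
          then have "k \<notin> {1..n}" using False by auto
          then show ?thesis using False by (auto simp: amul_def aone_def)
        qed
      qed
    qed
  next
    fix w assume w: "(\<forall>k. k \<notin> {1..n} \<longrightarrow> w k = 0) \<and> amul m n Ups u (\<lambda>k. L k t) w = aone m"
    have lowk: "w k = 1 / L k t" if k: "k \<in> {1..m}" for k
    proof -
      have "amul m n Ups u (\<lambda>k. L k t) w k = aone m k" using w by simp
      then have "L k t * w k = 1" using amul_low[OF HZ assms(2) k] k by (simp add: aone_def)
      then show ?thesis using NZ[OF k t] by (simp add: field_simps)
    qed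
    show "w = W t"
    proof
      fix k
      show "w k = W t k"
      proof (cases "k \<in> {1..m}")
        case True then show ?thesis using lowk by (simp add: W_def)
      next
        case False
        show ?thesis
        proof (cases "k \<in> {m+1..n}")
          case True
          then have uk: "u k \<in> {1..m}" using assms(3) by blast
          have "amul m n Ups u (\<lambda>k. L k t) w k = aone m k" using w by simp
          then have "L (u k) t * w k + L k t * w (u k) = 0" using amul_high[OF HZ assms(2) True uk] True by (simp add: aone_def)
          then have "w k = - L k t * w (u k) / L (u k) t" using NZ[OF uk t]
            by (simp add: field_simps) (metis add.commute add_eq_0_iff mult.commute)
          then show ?thesis using lowk[OF uk] NZ[OF uk t] True False
            by (simp add: W_def field_simps power2_eq_square)
        next
          case False2: False
          then show ?thesis using False w by (auto simp: W_def)
        qed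
      qed
    qed
  qed
  have contW: "continuous_on {0..1} (\<lambda>t. W t k)" for k
  proof (cases "k \<in> {1..m}")
    case True
    have eq: "(\<lambda>t. W t k) = (\<lambda>t. 1 / L k t)" using True by (simp add: W_def fun_eq_iff)
    show ?thesis unfolding eq using NZ[OF True] by (auto intro!: continuous_intros contL)
  next
    case False
    show ?thesis
    proof (cases "k \<in> {m+1..n}")
      case True
      then have uk: "u k \<in> {1..m}" using assms(3) by blast
      have eq: "(\<lambda>t. W t k) = (\<lambda>t. - L k t / (L (u k) t)^2)" using True False by (simp add: W_def fun_eq_iff)
      show ?thesis unfolding eq using NZ[OF uk] by (auto intro!: continuous_intros contL)
    next
      case False2: False
      have eq: "(\<lambda>t. W t k) = (\<lambda>t. 0)" using False False2 by (auto simp: W_def fun_eq_iff)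
      show ?thesis unfolding eq by simp
    qed
  qed
  define X where "X j k = integral {0..1} (\<lambda>t. W t k * of_real (circ' R p q t $ j))" for j k
  have HI: "((\<lambda>t. W t k * of_real (circ' R p q t $ j)) has_integral X j k) {0..1}" for j k
    unfolding X_def by (intro integrable_integral integrable_continuous_interval continuous_intros contW circ'_cont)
  have XI: "integral {0..1} (\<lambda>t. ainv m n Ups u (zeta m a b (circ R p q t)) k * of_real (circ' R p q t $ j)) = X j k" for j k
    unfolding X_def by (rule integral_cong) (simp add: INV)
  have AI: "alg_integral m n Ups u a b (\<lambda>w. ainv m n Ups u (zeta m a b w)) (circ R p q) (circ' R p q) k
      = X 1 k + amul m n Ups u a (X 2) k + amul m n Ups u b (X 3) k" for k
  proof -
    have e2: "(\<lambda>k. integral {0..1} (\<lambda>t. ainv m n Ups u (zeta m a b (circ R p q t)) k * of_real (circ' R p q t $ 2))) = X 2"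
      using XI by auto
    have e3: "(\<lambda>k. integral {0..1} (\<lambda>t. ainv m n Ups u (zeta m a b (circ R p q t)) k * of_real (circ' R p q t $ 3))) = X 3"
      using XI by auto
    show ?thesis unfolding alg_integral_def Let_def e2 e3 XI ..
  qed
  show ?thesis
  proof
    fix k assume k: "k \<in> {1..n}"
    show "alg_integral m n Ups u a b (\<lambda>w. ainv m n Ups u (zeta m a b w)) (circ R p q) (circ' R p q) k
           = 2 * of_real pi * \<i> * aone m k"
    proof (cases "k \<in> {1..m}")
      case True
      have val: "alg_integral m n Ups u a b (\<lambda>w. ainv m n Ups u (zeta m a b w)) (circ R p q) (circ' R p q) k
          = X 1 k + a k * X 2 k + b k * X 3 k"
        unfolding AI amul_low[OF HZ assms(2) True] ..
      have "((\<lambda>t. W t k * of_real (circ' R p q t $ 1) + a k * (W t k * of_real (circ' R p q t $ 2))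
              + b k * (W t k * of_real (circ' R p q t $ 3))) has_integral (X 1 k + a k * X 2 k + b k * X 3 k)) {0..1}"
        by (intro has_integral_add has_integral_mult_right HI)
      then have "((\<lambda>t. 1 / (L k t - 0) * vector_derivative (L k) (at t)) has_integral (X 1 k + a k * X 2 k + b k * X 3 k)) {0..1}"
        by (rule has_integral_eq[rotated]) (use True in \<open>simp add: vector_derivative_at[OF D] W_def L'_def aone_def algebra_simps add_divide_distrib\<close>)
      then have ci: "contour_integral (L k) (\<lambda>w. 1 / (w - 0)) = X 1 k + a k * X 2 k + b k * X 3 k"
        unfolding contour_integral_integral by (rule integral_unique)
      have vp: "valid_path (L k)"
        unfolding valid_path_def
        by (rule C1_differentiable_imp_piecewise) (auto simp: C1_differentiable_on_def intro!: exI[of _ "L' k"] D contL')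
      have nz: "0 \<notin> path_image (L k)" using NZ[OF True] by (auto simp: path_image_def)
      have "winding_number (fpath a b k (circ R p q)) 0 = 1" using jordan True by blast
      then have "winding_number (L k) 0 = 1" using fp[OF True] by simp
      then have "1 = 1/(2*pi*\<i>) * contour_integral (L k) (\<lambda>w. 1 / (w - 0))"
        using winding_number_valid_path[OF vp nz] by simp
      then have "contour_integral (L k) (\<lambda>w. 1 / (w - 0)) = 2 * of_real pi * \<i>"
        by (simp add: field_simps)
      then show ?thesis using val ci True by (simp add: aone_def)
    next
      case False
      then have kh: "k \<in> {m+1..n}" using k by auto
      then have uk: "u k \<in> {1..m}" using assms(3) by blast
      have val: "alg_integral m n Ups u a b (\<lambda>w. ainv m n Ups u (zeta m a b w)) (circ R p q) (circ' R p q) k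
          = X 1 k + (a (u k) * X 2 k + a k * X 2 (u k)) + (b (u k) * X 3 k + b k * X 3 (u k))"
        unfolding AI amul_high[OF HZ assms(2) kh uk] ..
      have "((\<lambda>t. W t k * of_real (circ' R p q t $ 1) + (a (u k) * (W t k * of_real (circ' R p q t $ 2))
               + a k * (W t (u k) * of_real (circ' R p q t $ 2)))
              + (b (u k) * (W t k * of_real (circ' R p q t $ 3)) + b k * (W t (u k) * of_real (circ' R p q t $ 3))))
           has_integral (X 1 k + (a (u k) * X 2 k + a k * X 2 (u k)) + (b (u k) * X 3 k + b k * X 3 (u k)))) {0..1}"
        by (intro has_integral_add has_integral_mult_right HI)
      moreover
      define h where "h t = L k t * inverse (L (u k) t)" for t
      define hd where "hd t = L k t * (L' (u k) t * - (inverse (L (u k) t) ^ 2)) + L' k t * inverse (L (u k) t)" for t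
      have hder: "(h has_vector_derivative hd t) (at t within {0..1})" if t: "t \<in> {0..1}" for t
      proof -
        have "((inverse \<circ> L (u k)) has_vector_derivative (L' (u k) t * - (inverse (L (u k) t) ^ 2))) (at t)"
          by (rule field_vector_diff_chain_at[OF D]) (use NZ[OF uk t] in \<open>auto intro!: derivative_eq_intros simp: power2_eq_square\<close>)
        then have i: "((\<lambda>x. inverse (L (u k) x)) has_vector_derivative (L' (u k) t * - (inverse (L (u k) t) ^ 2))) (at t)"
          by (simp add: o_def)
        have "(h has_vector_derivative hd t) (at t)"
          unfolding h_def hd_def
          by (rule has_vector_derivative_eq_rhs[OF has_vector_derivative_mult[OF D i]]) (simp add: algebra_simps)
        then show ?thesis by (rule has_vector_derivative_at_within)
      qed
      have "(hd has_integral (h 1 - h 0)) {0..1}"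
        by (rule fundamental_theorem_of_calculus) (auto intro: hder)
      then have "(hd has_integral 0) {0..1}" by (simp add: h_def L_def circ_period)
      then have "((\<lambda>t. W t k * of_real (circ' R p q t $ 1) + (a (u k) * (W t k * of_real (circ' R p q t $ 2))
               + a k * (W t (u k) * of_real (circ' R p q t $ 2)))
              + (b (u k) * (W t k * of_real (circ' R p q t $ 3)) + b k * (W t (u k) * of_real (circ' R p q t $ 3))))
           has_integral 0) {0..1}"
      proof (rule has_integral_eq[rotated])
        fix t :: real assume t: "t \<in> {0..1}"
        have "u k \<notin> {m+1..n}" using uk by auto
        then show "hd t = W t k * of_real (circ' R p q t $ 1) + (a (u k) * (W t k * of_real (circ' R p q t $ 2))
               + a k * (W t (u k) * of_real (circ' R p q t $ 2)))
              + (b (u k) * (W t k * of_real (circ' R p q t $ 3)) + b k * (W t (u k) * of_real (circ' R p q t $ 3)))"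
          using NZ[OF uk t] uk kh False
          by (simp add: hd_def W_def L'_def aone_def field_simps power2_eq_square)
      qed
      ultimately have "X 1 k + (a (u k) * X 2 k + a k * X 2 (u k)) + (b (u k) * X 3 k + b k * X 3 (u k)) = 0"
        using has_integral_unique by blast
      then show ?thesis using val False by (simp add: aone_def)
    qed
  qed
qed

end
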